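(* Let $\mathcal X$ be finite with $N=|\mathcal X|\ge2$, let $0<c<1/N$ and $\varepsilon\ge\log\frac{2}{Nc}$. Then for every convex $f:(0,\infty)\to\mathbb R$ with $f(1)=0$ that is twice continuously differentiable with $f''(1)>0$, $$\sup_{K\in\mathcal M(\varepsilon,c)}\eta_f(K)=1.$$
   Context: For such $f$ and distributions $P\ll Q$ on a finite set, $D_f(P\|Q)=\sum_y Q(y)f\big(P(y)/Q(y)\big)$. For a kernel $K$ (row-stochastic matrix with entries $K_{Y|X=x}(y)$, $(K\circ P_X)(y)=\sum_xK_{Y|X=x}(y)P_X(x)$), $\eta_f(K)=\sup\frac{D_f(K\circ P_X\|K\circ Q_X)}{D_f(P_X\|Q_X)}$, the supremum over pairs of distributions on $\mathcal X$ with $0<D_f(P_X\|Q_X)<\infty$. PML: $\ell_{K\times P_X}(X\to y)=\log\frac{\max_x K_{Y|X=x}(y)}{(K\circ P_X)(y)}$ for full-support $P_X$ and $(K\circ P_X)(y)>0$. $\mathcal Q_{\mathcal X}(c)=\{P_X:\min_xP_X(x)\ge c\}$; $C(K,\mathcal P)=\sup_{P_X\in\mathcal P}\sup_{y:(K\circ P_X)(y)>0}\ell_{K\times P_X}(X\to y)$; $\mathcal M(\varepsilon,c)$ is the set of kernels from $\mathcal X$ to any finite output set with $C(K,\mathcal Q_{\mathcal X}(c))\le\varepsilon$. *)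

theory Defs
  imports "HOL-Analysis.Analysis"
begin

definition is_dist :: "('a \<Rightarrow> real) \<Rightarrow> 'a set \<Rightarrow> bool" where
  "is_dist P A \<longleftrightarrow> (\<forall>a. 0 \<le> P a) \<and> (\<forall>a. a \<notin> A \<longrightarrow> P a = 0) \<and> sum P A = 1"

definition abs_cont :: "('a \<Rightarrow> real) \<Rightarrow> ('a \<Rightarrow> real) \<Rightarrow> 'a set \<Rightarrow> bool" where
  "abs_cont P Q A \<longleftrightarrow> (\<forall>y\<in>A. Q y = 0 \<longrightarrow> P y = 0)"

definition fzero :: "(real \<Rightarrow> real) \<Rightarrow> ereal" where
  "fzero f = Lim (at_right 0) (\<lambda>t. ereal (f t))"

definition fdiv :: "(real \<Rightarrow> real) \<Rightarrow> 'a set \<Rightarrow> ('a \<Rightarrow> real) \<Rightarrow> ('a \<Rightarrow> real) \<Rightarrow> ereal" where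
  "fdiv f A P Q = (\<Sum>y\<in>A. if Q y = 0 then 0
      else if P y = 0 then ereal (Q y) * fzero f
      else ereal (Q y * f (P y / Q y)))"

definition kcomp :: "('x::finite \<Rightarrow> 'y \<Rightarrow> real) \<Rightarrow> ('x \<Rightarrow> real) \<Rightarrow> 'y \<Rightarrow> real" where
  "kcomp K P y = (\<Sum>x\<in>UNIV. K x y * P x)"

definition is_kernel :: "'y set \<Rightarrow> ('x \<Rightarrow> 'y \<Rightarrow> real) \<Rightarrow> bool" where
  "is_kernel Y K \<longleftrightarrow> finite Y \<and> (\<forall>x. is_dist (K x) Y)"

definition eta :: "(real \<Rightarrow> real) \<Rightarrow> 'y set \<Rightarrow> ('x::finite \<Rightarrow> 'y \<Rightarrow> real) \<Rightarrow> ereal" where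
  "eta f Y K = (SUP PQ \<in> {(P, Q). is_dist P (UNIV :: 'x set) \<and> is_dist Q UNIV \<and> abs_cont P Q UNIV
        \<and> 0 < fdiv f UNIV P Q \<and> fdiv f UNIV P Q < \<infinity>}.
      fdiv f Y (kcomp K (fst PQ)) (kcomp K (snd PQ)) / fdiv f UNIV (fst PQ) (snd PQ))"

definition pml :: "('x::finite \<Rightarrow> 'y \<Rightarrow> real) \<Rightarrow> ('x \<Rightarrow> real) \<Rightarrow> 'y \<Rightarrow> real" where
  "pml K P y = ln (Max (range (\<lambda>x. K x y)) / kcomp K P y)"

definition Qset :: "real \<Rightarrow> ('x::finite \<Rightarrow> real) set" where
  "Qset c = {P. is_dist P UNIV \<and> Min (range P) \<ge> c}"

definition Ccap :: "'y set \<Rightarrow> ('x::finite \<Rightarrow> 'y \<Rightarrow> real) \<Rightarrow> ('x \<Rightarrow> real) set \<Rightarrow> ereal" where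
  "Ccap Y K Ps = (SUP P \<in> Ps. SUP y \<in> {y \<in> Y. kcomp K P y > 0}. ereal (pml K P y))"

text \<open>M(eps,c): kernels (output sets represented as finite subsets of nat) with
  C(K, Q(c)) <= eps.\<close>
definition Mset :: "real \<Rightarrow> real \<Rightarrow> (nat set \<times> ('x::finite \<Rightarrow> nat \<Rightarrow> real)) set" where
  "Mset eps c = {(Y, K). is_kernel Y K \<and> Ccap Y K (Qset c) \<le> ereal eps}"

end

theory Submission
  imports Defs
begin


lemma tangent_pos:
  assumes cvx: "convex_on {0<..} f" and der: "\<forall>t>0. (f has_real_derivative f' t) (at t)"
    and c: "c > 0" and x: "x > 0"
  shows "f x - f c \<ge> f' c * (x - c)"
proof (rule convex_on_imp_above_tangent[OF cvx])
  show "connected ({0<..}::real set)" by simp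
  show "c \<in> interior {0<..}" using c by (simp add: interior_open)
  show "x \<in> {0<..}" using x by simp
  show "(f has_real_derivative f' c) (at c within {0<..})"
    using der c has_field_derivative_at_within by blast
qed

lemma fzero_lim:
  fixes f :: "real \<Rightarrow> real"
  assumes cvx: "convex_on {0<..} f" and der: "\<forall>t>0. (f has_real_derivative f' t) (at t)"
  shows "\<exists>l. ((\<lambda>t. ereal (f t)) \<longlongrightarrow> l) (at_right 0) \<and> l \<noteq> -\<infinity>"
proof -
  define d where "d = f' 1"
  define psi where "psi t = f t - d * t" for t
  have tan: "f x - f c \<ge> f' c * (x - c)" if "c > 0" "x > 0" for c x
    using tangent_pos[OF cvx der that] .
  have anti: "psi t \<le> psi s" if "0 < s" "s < t" "t \<le> 1" for s t
  proof -
    have "f t - f s \<le> f' t * (t - s)" using tan[of t s] that by (simp add: algebra_simps)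
    moreover have "f' t \<le> d"
    proof (cases "t = 1")
      case True then show ?thesis by (simp add: d_def)
    next
      case False
      have "f' t * (1 - t) \<le> d * (1 - t)" using tan[of t 1] tan[of 1 t] that by (simp add: d_def algebra_simps)
      then show ?thesis using False that by simp
    qed
    ultimately have "f t - f s \<le> d * (t - s)"
      by (smt (verit, best) mult_right_mono that(2))
    then show ?thesis by (simp add: psi_def algebra_simps)
  qed
  define l where "l = (SUP t\<in>{0<..<1::real}. ereal (psi t))"
  have lb: "ereal (psi (1/2)) \<le> l" unfolding l_def by (rule SUP_upper) auto
  have tl: "((\<lambda>t. ereal (psi t)) \<longlongrightarrow> l) (at_right 0)"
  proof (rule increasing_tendsto)
    show "\<forall>\<^sub>F n in at_right 0. ereal (psi n) \<le> l"
      using eventually_at_right_real[of 0 1, OF zero_less_one] by eventually_elim (auto simp: l_def intro: SUP_upper)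
  next
    fix x assume "x < l"
    then obtain t0 where t0: "t0 \<in> {0<..<1}" "x < ereal (psi t0)" unfolding l_def less_SUP_iff by blast
    show "\<forall>\<^sub>F n in at_right 0. x < ereal (psi n)"
    proof (rule eventually_mono[OF eventually_at_right_real[of 0 t0]])
      show "0 < t0" using t0 by simp
    next
      fix n assume elim: "n \<in> {0<..<t0}"
      then have "psi t0 \<le> psi n" using anti[of n t0] t0 by auto
      then show "x < ereal (psi n)" using elim t0 by (meson ereal_less_eq(3) less_le_trans)
    qed
  qed
  have t2: "((\<lambda>t. ereal (d * t)) \<longlongrightarrow> ereal 0) (at_right 0)"
    unfolding lim_ereal by (intro tendsto_eq_intros) auto
  have "((\<lambda>t. ereal (psi t) + ereal (d * t)) \<longlongrightarrow> l + ereal 0) (at_right 0)"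
    by (rule tendsto_add_ereal_general1[OF _ tl t2]) simp
  then have "((\<lambda>t. ereal (f t)) \<longlongrightarrow> l) (at_right 0)" by (simp add: psi_def)
  moreover have "l \<noteq> -\<infinity>" using lb by auto
  ultimately show ?thesis by blast
qed


lemma g_convex:
  fixes f :: "real \<Rightarrow> real"
  assumes cvx: "convex_on {0<..} f" and cont: "\<And>t. t > 0 \<Longrightarrow> isCont f t"
    and lim: "(f \<longlongrightarrow> z) (at_right 0)"
  shows "convex_on {0..} (\<lambda>t. if t = 0 then z else f t)"
proof (rule convex_on_linorderI)
  show "convex {0::real..}" by simp
  fix t x y :: real
  assume t: "0 < t" "t < 1" and x: "x \<in> {0..}" and y: "y \<in> {0..}" and xy: "x < y"
  have yp: "y > 0" using x xy by auto
  have pp: "(1 - t) *\<^sub>R x + t *\<^sub>R y > 0" using t x yp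
    by (simp add: add_nonneg_pos)
  show "(if (1 - t) *\<^sub>R x + t *\<^sub>R y = 0 then z else f ((1 - t) *\<^sub>R x + t *\<^sub>R y))
        \<le> (1 - t) * (if x = 0 then z else f x) + t * (if y = 0 then z else f y)"
  proof (cases "x = 0")
    case False
    then have "x > 0" using x by auto
    then have "f ((1 - t) *\<^sub>R x + t *\<^sub>R y) \<le> (1 - t) * f x + t * f y"
      using convex_onD[OF cvx, of t x y] t yp by auto
    then show ?thesis using pp False yp by simp
  next
    case True
    have l1: "((\<lambda>s. f ((1 - t) * s + t * y) - (1 - t) * f s - t * f y) \<longlongrightarrow>
        f ((1 - t) * 0 + t * y) - (1 - t) * z - t * f y) (at_right 0)"
    proof -
      have c1: "isCont f ((1 - t) * 0 + t * y)" using cont t yp by simp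
      have c2: "((\<lambda>s. (1 - t) * s + t * y) \<longlongrightarrow> (1 - t) * 0 + t * y) (at_right 0)"
        by (intro tendsto_intros)
      have c3: "((\<lambda>s. f ((1 - t) * s + t * y)) \<longlongrightarrow> f ((1 - t) * 0 + t * y)) (at_right 0)"
        by (rule isCont_tendsto_compose[OF c1 c2])
      show ?thesis by (intro tendsto_diff c3 tendsto_mult tendsto_const lim)
    qed
    have ev: "\<forall>\<^sub>F s in at_right 0. f ((1 - t) * s + t * y) - (1 - t) * f s - t * f y \<le> 0"
    proof (rule eventually_mono[OF eventually_at_right_real[of 0 1]])
      fix s :: real assume s: "s \<in> {0<..<1}"
      have "f ((1 - t) *\<^sub>R s + t *\<^sub>R y) \<le> (1 - t) * f s + t * f y"
        using convex_onD[OF cvx, of t s y] t yp s by auto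
      then show "f ((1 - t) * s + t * y) - (1 - t) * f s - t * f y \<le> 0" by simp
    qed simp
    have "f ((1 - t) * 0 + t * y) - (1 - t) * z - t * f y \<le> 0"
      by (rule tendsto_upperbound[OF l1 ev]) simp
    then show ?thesis using True pp yp by simp
  qed
qed


lemma dpi_real:
  fixes K :: "'x::finite \<Rightarrow> 'y \<Rightarrow> real" and g :: "real \<Rightarrow> real"
  assumes Y: "is_kernel Y K" and P: "is_dist P UNIV" and Q: "is_dist Q UNIV"
    and ac: "abs_cont P Q UNIV"
    and g: "convex_on S g" and S1: "1 \<in> S" and SP: "\<forall>x. Q x \<noteq> 0 \<longrightarrow> P x / Q x \<in> S"
  shows "(\<Sum>y\<in>Y. if kcomp K Q y = 0 then 0 else kcomp K Q y * g (kcomp K P y / kcomp K Q y))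
     \<le> (\<Sum>x\<in>UNIV. if Q x = 0 then 0 else Q x * g (P x / Q x))"
proof -
  define T where "T x = (if Q x = 0 then 0 else Q x * g (P x / Q x))" for x
  have finY: "finite Y" and Kd: "\<And>x. is_dist (K x) Y" using Y by (auto simp: is_kernel_def)
  have Knn: "K x y \<ge> 0" for x y using Kd[of x] by (auto simp: is_dist_def)
  have Ks: "(\<Sum>y\<in>Y. K x y) = 1" for x using Kd[of x] by (auto simp: is_dist_def)
  have Qnn: "Q x \<ge> 0" for x using Q by (auto simp: is_dist_def)
  have Pnn: "P x \<ge> 0" for x using P by (auto simp: is_dist_def)
  have PQ0: "Q x = 0 \<Longrightarrow> P x = 0" for x using ac by (auto simp: abs_cont_def)
  have "(\<Sum>x\<in>UNIV. T x) = (\<Sum>x\<in>UNIV. (\<Sum>y\<in>Y. K x y) * T x)" by (simp add: Ks)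
  also have "\<dots> = (\<Sum>y\<in>Y. \<Sum>x\<in>UNIV. K x y * T x)"
    unfolding sum_distrib_right by (rule sum.swap)
  finally have R: "(\<Sum>x\<in>UNIV. T x) = (\<Sum>y\<in>Y. \<Sum>x\<in>UNIV. K x y * T x)" .
  have "(if kcomp K Q y = 0 then 0 else kcomp K Q y * g (kcomp K P y / kcomp K Q y))
        \<le> (\<Sum>x\<in>UNIV. K x y * T x)" for y
  proof (cases "kcomp K Q y = 0")
    case True
    then have "\<forall>x\<in>UNIV. K x y * Q x = 0"
      unfolding kcomp_def by (subst sum_nonneg_eq_0_iff[symmetric]) (auto simp: Knn Qnn)
    then have z: "K x y * T x = 0" for x by (auto simp: T_def)
    have "(\<Sum>x\<in>UNIV. K x y * T x) = 0" by (simp only: z sum.neutral_const)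
    then show ?thesis using True by simp
  next
    case False
    define q where "q = kcomp K Q y"
    have "q \<ge> 0" unfolding q_def kcomp_def by (intro sum_nonneg mult_nonneg_nonneg Knn Qnn)
    then have q0: "q > 0" using False q_def by linarith
    define w where "w x = K x y * Q x / q" for x
    define r where "r x = (if Q x = 0 then 1 else P x / Q x)" for x
    have ws: "(\<Sum>x\<in>UNIV. w x) = 1" using q0
      by (simp add: w_def q_def kcomp_def flip: sum_divide_distrib)
    have wnn: "w x \<ge> 0" for x using q0 Knn Qnn by (simp add: w_def)
    have rS: "r x \<in> S" for x using SP S1 by (simp add: r_def)
    have j: "g (\<Sum>x\<in>UNIV. w x *\<^sub>R r x) \<le> (\<Sum>x\<in>UNIV. w x * g (r x))"
      by (rule convex_on_sum[OF _ _ g ws]) (auto simp: wnn rS)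
    have e1: "w x * r x = K x y * P x / q" for x
      using PQ0[of x] by (auto simp: w_def r_def)
    have e2: "(\<Sum>x\<in>UNIV. w x *\<^sub>R r x) = kcomp K P y / q"
      by (simp only: real_scaleR_def e1 kcomp_def sum_divide_distrib)
    have e3: "q * (w x * g (r x)) = K x y * T x" for x
      using q0 by (auto simp: w_def r_def T_def)
    have "q * g (kcomp K P y / q) \<le> q * (\<Sum>x\<in>UNIV. w x * g (r x))"
      using j e2 q0 by simp
    also have "\<dots> = (\<Sum>x\<in>UNIV. K x y * T x)" by (simp add: sum_distrib_left e3)
    finally show ?thesis using False by (simp add: q_def)
  qed
  then have "(\<Sum>y\<in>Y. if kcomp K Q y = 0 then 0 else kcomp K Q y * g (kcomp K P y / kcomp K Q y))
     \<le> (\<Sum>y\<in>Y. \<Sum>x\<in>UNIV. K x y * T x)" by (intro sum_mono) auto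
  then show ?thesis using R by (simp add: T_def)
qed


lemma fdiv_real:
  fixes P Q :: "'a \<Rightarrow> real" and g f :: "real \<Rightarrow> real"
  assumes nn: "\<forall>y\<in>A. P y \<ge> 0 \<and> Q y \<ge> 0"
    and z: "\<forall>y\<in>A. Q y \<noteq> 0 \<longrightarrow> P y = 0 \<longrightarrow> fzero f = ereal (g 0)"
    and gf: "\<forall>t>0. g t = f t"
  shows "fdiv f A P Q = ereal (\<Sum>y\<in>A. if Q y = 0 then 0 else Q y * g (P y / Q y))"
  unfolding fdiv_def sum_ereal[symmetric]
proof (rule sum.cong[OF refl])
  fix y assume y: "y \<in> A"
  show "(if Q y = 0 then 0 else if P y = 0 then ereal (Q y) * fzero f else ereal (Q y * f (P y / Q y))) =
        ereal (if Q y = 0 then 0 else Q y * g (P y / Q y))"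
  proof (cases "Q y = 0")
    case False
    show ?thesis
    proof (cases "P y = 0")
      case True then show ?thesis using False z y by simp
    next
      case F2: False
      have "P y > 0" "Q y > 0" using nn y False F2 by (auto simp: order_le_less)
      then have "P y / Q y > 0" by simp
      then show ?thesis using False F2 gf by simp
    qed
  qed simp
qed

lemma ratio_le1:
  fixes f :: "real \<Rightarrow> real" and K :: "'x::finite \<Rightarrow> 'y \<Rightarrow> real"
  assumes cvx: "convex_on {0<..} f" and der: "\<forall>t>0. (f has_real_derivative f' t) (at t)"
    and Y: "is_kernel Y K" and P: "is_dist P UNIV" and Q: "is_dist Q UNIV"
    and ac: "abs_cont P Q UNIV" and pos: "0 < fdiv f UNIV P Q" and fin: "fdiv f UNIV P Q < \<infinity>"
  shows "fdiv f Y (kcomp K P) (kcomp K Q) / fdiv f UNIV P Q \<le> 1"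
proof -
  obtain l where lim: "((\<lambda>t. ereal (f t)) \<longlongrightarrow> l) (at_right 0)" and lm: "l \<noteq> -\<infinity>"
    using fzero_lim[OF cvx der] by blast
  have fz: "fzero f = l" unfolding fzero_def by (rule tendsto_Lim[OF _ lim]) simp
  have finY: "finite Y" and Kd: "\<And>x. is_dist (K x) Y" using Y by (auto simp: is_kernel_def)
  have Knn: "K x y \<ge> 0" for x y using Kd[of x] by (auto simp: is_dist_def)
  have Qnn: "Q x \<ge> 0" for x using Q by (auto simp: is_dist_def)
  have Pnn: "P x \<ge> 0" for x using P by (auto simp: is_dist_def)
  have KPnn: "kcomp K P y \<ge> 0" for y unfolding kcomp_def by (intro sum_nonneg mult_nonneg_nonneg Knn Pnn)
  have KQnn: "kcomp K Q y \<ge> 0" for y unfolding kcomp_def by (intro sum_nonneg mult_nonneg_nonneg Knn Qnn)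
  have main: "\<exists>a b. fdiv f Y (kcomp K P) (kcomp K Q) = ereal a \<and> fdiv f UNIV P Q = ereal b \<and> a \<le> b"
  proof (cases l)
    case (real z)
    define g where "g t = (if t = 0 then z else f t)" for t
    have cont: "isCont f t" if "t > 0" for t using der that DERIV_isCont by blast
    have gc: "convex_on {0..} g" unfolding g_def
      by (rule g_convex[OF cvx cont]) (use lim real in simp_all)
    have e1: "fdiv f Y (kcomp K P) (kcomp K Q) = ereal (\<Sum>y\<in>Y. if kcomp K Q y = 0 then 0 else kcomp K Q y * g (kcomp K P y / kcomp K Q y))"
      by (rule fdiv_real) (auto simp: KPnn KQnn fz real g_def)
    have e2: "fdiv f UNIV P Q = ereal (\<Sum>x\<in>UNIV. if Q x = 0 then 0 else Q x * g (P x / Q x))"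
      by (rule fdiv_real) (auto simp: Pnn Qnn fz real g_def)
    have "(\<Sum>y\<in>Y. if kcomp K Q y = 0 then 0 else kcomp K Q y * g (kcomp K P y / kcomp K Q y))
     \<le> (\<Sum>x\<in>UNIV. if Q x = 0 then 0 else Q x * g (P x / Q x))"
      by (rule dpi_real[OF Y P Q ac gc]) (auto simp: Pnn Qnn)
    then show ?thesis using e1 e2 by blast
  next
    case PInf
    have nz: "P x \<noteq> 0" if "Q x \<noteq> 0" for x
    proof
      assume "P x = 0"
      then have "(if Q x = 0 then 0 else if P x = 0 then ereal (Q x) * fzero f else ereal (Q x * f (P x / Q x))) = \<infinity>"
        using that Qnn[of x] fz PInf by simp
      then have "\<exists>i\<in>UNIV. (if Q i = 0 then 0 else if P i = 0 then ereal (Q i) * fzero f else ereal (Q i * f (P i / Q i))) = \<infinity>"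
        by blast
      then have "fdiv f UNIV P Q = \<infinity>" unfolding fdiv_def sum_Pinfty by (simp only: finite simp_thms)
      then show False using fin by simp
    qed
    have nzK: "kcomp K P y \<noteq> 0" if "kcomp K Q y \<noteq> 0" for y
    proof -
      have "\<exists>x. K x y * Q x \<noteq> 0"
      proof (rule ccontr)
        assume "\<not> (\<exists>x. K x y * Q x \<noteq> 0)"
        then have "kcomp K Q y = 0" unfolding kcomp_def by (simp only: not_ex not_not sum.neutral_const)
        then show False using that by simp
      qed
      then obtain x where "K x y * Q x \<noteq> 0" by blast
      then have kx: "K x y > 0" "Q x > 0" using Knn[of x y] Qnn[of x] by (auto simp: order_le_less)
      then have "P x > 0" using nz[of x] Pnn[of x] by auto
      then have "K x y * P x > 0" using kx by simp
      also have "K x y * P x \<le> kcomp K P y" unfolding kcomp_def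
        by (rule member_le_sum) (auto intro: mult_nonneg_nonneg Knn Pnn)
      finally show ?thesis by simp
    qed
    have e1: "fdiv f Y (kcomp K P) (kcomp K Q) = ereal (\<Sum>y\<in>Y. if kcomp K Q y = 0 then 0 else kcomp K Q y * f (kcomp K P y / kcomp K Q y))"
      by (rule fdiv_real) (auto simp: KPnn KQnn nzK)
    have e2: "fdiv f UNIV P Q = ereal (\<Sum>x\<in>UNIV. if Q x = 0 then 0 else Q x * f (P x / Q x))"
      by (rule fdiv_real) (auto simp: Pnn Qnn nz)
    have "(\<Sum>y\<in>Y. if kcomp K Q y = 0 then 0 else kcomp K Q y * f (kcomp K P y / kcomp K Q y))
     \<le> (\<Sum>x\<in>UNIV. if Q x = 0 then 0 else Q x * f (P x / Q x))"
    proof (rule dpi_real[OF Y P Q ac cvx])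
      show "\<forall>x. Q x \<noteq> 0 \<longrightarrow> P x / Q x \<in> {0<..}"
      proof (intro allI impI)
        fix x assume "Q x \<noteq> 0"
        then have "P x > 0" "Q x > 0" using nz[of x] Pnn[of x] Qnn[of x] by auto
        then show "P x / Q x \<in> {0<..}" by simp
      qed
    qed simp
    then show ?thesis using e1 e2 by blast
  next
    case MInf then show ?thesis using lm by simp
  qed
  then obtain a b where ab: "fdiv f Y (kcomp K P) (kcomp K Q) = ereal a" "fdiv f UNIV P Q = ereal b" "a \<le> b"
    by blast
  have "b > 0" using pos ab by simp
  then show ?thesis using ab by simp
qed


lemma strict_pos:
  fixes f f' f'' :: "real \<Rightarrow> real"
  assumes d1: "\<forall>t>0. (f has_real_derivative f' t) (at t)"
    and d2: "\<forall>t>0. (f' has_real_derivative f'' t) (at t)" and pos: "f'' 1 > 0"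
  shows "\<exists>h. 0 < h \<and> h < 1 \<and> f (1 + h) + f (1 - h) - 2 * f 1 > 0"
proof -
  have D2: "DERIV f' 1 :> f'' 1" using d2 by simp
  obtain da where da: "da > 0" "\<forall>h>0. h < da \<longrightarrow> f' 1 < f' (1 + h)"
    using DERIV_pos_inc_right[OF D2 pos] by blast
  obtain db where db: "db > 0" "\<forall>h>0. h < db \<longrightarrow> f' (1 - h) < f' 1"
    using DERIV_pos_inc_left[OF D2 pos] by blast
  define h where "h = min 1 (min da db) / 2"
  have h: "0 < h" "h < 1" "h < da" "h < db" using da db by (auto simp: h_def)
  obtain z where z: "1 < z" "z < 1 + h" "f (1 + h) - f 1 = (1 + h - 1) * f' z"
    using MVT2[of 1 "1 + h" f f'] h d1 by auto
  obtain w where w: "1 - h < w" "w < 1" "f 1 - f (1 - h) = (1 - (1 - h)) * f' w"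
    using MVT2[of "1 - h" 1 f f'] h d1 by auto
  have "f' 1 < f' z" using da(2)[rule_format, of "z - 1"] z h by auto
  moreover have "f' w < f' 1" using db(2)[rule_format, of "1 - w"] w h by auto
  ultimately have "h * f' w < h * f' z" using h by simp
  then have "f (1 + h) + f (1 - h) - 2 * f 1 > 0" using z w by (simp add: algebra_simps)
  then show ?thesis using h by blast
qed

lemma sum_two:
  fixes \<phi> :: "'x::finite \<Rightarrow> real"
  assumes "xa \<noteq> xb" "\<And>x. x \<noteq> xa \<Longrightarrow> x \<noteq> xb \<Longrightarrow> \<phi> x = 0"
  shows "(\<Sum>x\<in>UNIV. \<phi> x) = \<phi> xa + \<phi> xb"
proof -
  have "(\<Sum>x\<in>UNIV. \<phi> x) = (\<Sum>x\<in>{xa, xb}. \<phi> x)"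
    by (rule sum.mono_neutral_right) (use assms in auto)
  then show ?thesis using assms by simp
qed

lemma sum_two_e:
  fixes \<phi> :: "'x::finite \<Rightarrow> ereal"
  assumes "xa \<noteq> xb" "\<And>x. x \<noteq> xa \<Longrightarrow> x \<noteq> xb \<Longrightarrow> \<phi> x = 0"
  shows "(\<Sum>x\<in>UNIV. \<phi> x) = \<phi> xa + \<phi> xb"
proof -
  have "(\<Sum>x\<in>UNIV. \<phi> x) = (\<Sum>x\<in>{xa, xb}. \<phi> x)"
    by (rule sum.mono_neutral_right) (use assms in auto)
  then show ?thesis using assms by simp
qed


definition half_w :: "nat \<Rightarrow> nat \<Rightarrow> real" where
  "half_w N i = (if 2*i+1 < N then 1 else if 2*i+1 = N then 1/2 else 0)"

lemma half_w_sym: "i < N \<Longrightarrow> half_w N i + half_w N (N - Suc i) = 1"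
  unfolding half_w_def by auto

lemma half_w_range: "0 \<le> half_w N i" "half_w N i \<le> 1"
  unfolding half_w_def by auto

lemma half_w_sum: "(\<Sum>i<N. half_w N i) = real N / 2"
proof -
  have "(\<Sum>i<N. half_w N i) + (\<Sum>i<N. half_w N i) = (\<Sum>i<N. half_w N i) + (\<Sum>i<N. half_w N (N - Suc i))"
    by (simp add: sum.nat_diff_reindex)
  also have "\<dots> = (\<Sum>i<N. half_w N i + half_w N (N - Suc i))" by (simp add: sum.distrib)
  also have "\<dots> = (\<Sum>i<N. 1)" by (rule sum.cong) (auto simp: half_w_sym)
  finally show ?thesis by simp
qed

definition kern0 :: "('x \<Rightarrow> nat) \<Rightarrow> nat \<Rightarrow> 'x \<Rightarrow> nat \<Rightarrow> real" where
  "kern0 e N x y = (if y = 0 then half_w N (e x) else if y = 1 then 1 - half_w N (e x) else 0)"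

lemma kern0_kernel: "is_kernel {0,1} (kern0 e N)"
  unfolding is_kernel_def is_dist_def kern0_def using half_w_range by auto

lemma kern0_colsum:
  fixes e :: "'x::finite \<Rightarrow> nat"
  assumes e: "bij_betw e UNIV {0..<CARD('x)}" and y: "y \<in> {0,1}"
  shows "(\<Sum>x\<in>UNIV. kern0 e CARD('x) x y) = real CARD('x) / 2"
proof -
  let ?N = "CARD('x)"
  have r: "(\<Sum>x\<in>UNIV. h (e x)) = (\<Sum>i<?N. h i)" for h :: "nat \<Rightarrow> real"
    using sum.reindex_bij_betw[OF e, of h] by (simp add: lessThan_atLeast0)
  show ?thesis
  proof (cases "y = 0")
    case True
    then show ?thesis using r[of "half_w ?N"] by (simp add: kern0_def half_w_sum)
  next
    case False
    then have "y = 1" using y by simp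
    then have "(\<Sum>x\<in>UNIV. kern0 e ?N x y) = (\<Sum>i<?N. 1 - half_w ?N i)"
      using r[of "\<lambda>i. 1 - half_w ?N i"] by (simp add: kern0_def)
    also have "\<dots> = real ?N - real ?N / 2" by (simp add: sum_subtractf half_w_sum)
    finally show ?thesis by simp
  qed
qed


lemma kern0_M:
  fixes e :: "'x::finite \<Rightarrow> nat" and c eps :: real
  assumes e: "bij_betw e UNIV {0..<CARD('x)}" and c: "c > 0"
    and eps: "eps \<ge> ln (2 / (real CARD('x) * c))"
  shows "({0,1}, kern0 e CARD('x)) \<in> Mset eps c"
proof -
  let ?N = "CARD('x)"
  let ?K = "kern0 e CARD('x)"
  have Np: "real ?N > 0" by simp
  have Knn: "?K x y \<ge> 0" for x y using half_w_range by (simp add: kern0_def)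
  have Kle: "?K x y \<le> 1" for x y using half_w_range by (simp add: kern0_def)
  have "pml ?K P y \<le> eps" if P: "P \<in> Qset c" and y: "y \<in> {0,1}" for P y
  proof -
    have Pc: "P x \<ge> c" for x
    proof -
      have "Min (range P) \<le> P x" by (rule Min_le) auto
      then show ?thesis using P by (simp add: Qset_def)
    qed
    have "(\<Sum>x\<in>UNIV. ?K x y * c) \<le> kcomp ?K P y"
      unfolding kcomp_def by (intro sum_mono mult_left_mono Pc Knn)
    moreover have "(\<Sum>x\<in>UNIV. ?K x y * c) = c * (real ?N / 2)"
      using kern0_colsum[OF e y] by (simp add: sum_distrib_right[symmetric])
    ultimately have kb: "c * (real ?N / 2) \<le> kcomp ?K P y" by simp
    have kp: "c * (real ?N / 2) > 0" using c by simp
    have Mle: "Max (range (\<lambda>x. ?K x y)) \<le> 1" using Kle by (simp add: Max_le_iff)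
    have "\<exists>x. ?K x y > 0"
    proof (rule ccontr)
      assume "\<not> (\<exists>x. ?K x y > 0)"
      then have "?K x y \<le> 0" for x by (simp add: not_less)
      then have "(\<Sum>x\<in>UNIV. ?K x y) \<le> 0" by (simp add: sum_nonpos)
      then show False using kern0_colsum[OF e y] by simp
    qed
    then obtain x0 where x0: "?K x0 y > 0" by blast
    have "?K x0 y \<le> Max (range (\<lambda>x. ?K x y))" by (rule Max_ge) auto
    then have Mp: "Max (range (\<lambda>x. ?K x y)) > 0" using x0 by linarith
    have "Max (range (\<lambda>x. ?K x y)) / kcomp ?K P y \<le> 1 / (c * (real ?N / 2))"
      using Mle kb kp Mp by (intro frac_le) auto
    also have "\<dots> = 2 / (real ?N * c)" by simp
    finally have "ln (Max (range (\<lambda>x. ?K x y)) / kcomp ?K P y) \<le> ln (2 / (real ?N * c))"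
      using Mp kb kp by (intro ln_mono) auto
    then show ?thesis using eps unfolding pml_def by simp
  qed
  then have "Ccap {0,1} ?K (Qset c) \<le> ereal eps"
    unfolding Ccap_def by (intro SUP_least) auto
  then show ?thesis unfolding Mset_def using kern0_kernel by auto
qed


lemma kern0_eta:
  fixes e :: "'x::finite \<Rightarrow> nat" and f :: "real \<Rightarrow> real"
  assumes e: "bij_betw e UNIV {0..<CARD('x)}" and N2: "CARD('x) \<ge> 2"
    and hx: "\<exists>h. 0 < h \<and> h < 1 \<and> f (1 + h) + f (1 - h) - 2 * f 1 > 0" and f1: "f 1 = 0"
  shows "eta f {0,1} (kern0 e CARD('x)) \<ge> 1"
proof -
  let ?N = "CARD('x)"
  let ?K = "kern0 e CARD('x)"
  obtain h where h: "0 < h" "h < 1" "f (1 + h) + f (1 - h) > 0" using hx f1 by auto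
  have im: "e ` UNIV = {0..<?N}" using e by (simp add: bij_betw_def)
  obtain xa where xa: "e xa = 0" using im N2
    by (metis atLeastLessThan_iff imageE le0 less_le_trans pos2)
  obtain xb where xb: "e xb = ?N - 1" using im N2
    by (metis atLeastLessThan_iff diff_less imageE le0 less_le_trans pos2 zero_less_one)
  have ab: "xa \<noteq> xb" using xa xb N2 by auto
  have wa: "half_w ?N (e xa) = 1" using xa N2 by (simp add: half_w_def)
  have wb: "half_w ?N (e xb) = 0" using xb N2 unfolding half_w_def by (simp; linarith)
  define p where "p = (1 + h) / 2"
  define P where "P x = (if x = xa then p else if x = xb then 1 - p else 0)" for x
  define Q where "Q x = (if x = xa then 1/2 else if x = xb then 1/2 else (0::real))" for x
  have p: "0 < p" "p < 1" using h by (auto simp: p_def)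
  have sP: "(\<Sum>x\<in>UNIV. \<phi> x * P x) = \<phi> xa * p + \<phi> xb * (1 - p)" for \<phi>
    by (subst sum_two[OF ab]) (use ab in \<open>auto simp: P_def\<close>)
  have sQ: "(\<Sum>x\<in>UNIV. \<phi> x * Q x) = \<phi> xa / 2 + \<phi> xb / 2" for \<phi>
    by (subst sum_two[OF ab]) (use ab in \<open>auto simp: Q_def\<close>)
  have PD: "is_dist P UNIV" using sP[of "\<lambda>_. 1"] p by (auto simp: is_dist_def P_def)
  have QD: "is_dist Q UNIV" using sQ[of "\<lambda>_. 1"] by (auto simp: is_dist_def Q_def)
  have AC: "abs_cont P Q UNIV" by (auto simp: abs_cont_def P_def Q_def)
  have KP0: "kcomp ?K P 0 = p" and KP1: "kcomp ?K P 1 = 1 - p"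
    unfolding kcomp_def using sP wa wb by (auto simp: kern0_def)
  have KQ0: "kcomp ?K Q 0 = 1/2" and KQ1: "kcomp ?K Q 1 = 1/2"
    unfolding kcomp_def using sQ wa wb by (auto simp: kern0_def)
  define D where "D = f (1 + h) / 2 + f (1 - h) / 2"
  have Dp: "D > 0" using h by (simp add: D_def)
  have e1: "p / (1/2) = 1 + h" "(1 - p) / (1/2) = 1 - h" by (auto simp: p_def field_simps)
  have F1: "fdiv f {0,1} (kcomp ?K P) (kcomp ?K Q) = ereal D"
  proof -
    have a: "kcomp ?K P (Suc 0) = 1 - p" "kcomp ?K Q (Suc 0) = 1/2" using KP1 KQ1 by simp_all
    show ?thesis unfolding fdiv_def using p e1 by (simp add: D_def KP0 KQ0 a)
  qed
  have F0: "fdiv f UNIV P Q = ereal D"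
    unfolding fdiv_def by (subst sum_two_e[OF ab]) (use p e1 ab in \<open>auto simp: P_def Q_def D_def\<close>)
  have mem: "(P, Q) \<in> {(P, Q). is_dist P (UNIV :: 'x set) \<and> is_dist Q UNIV \<and> abs_cont P Q UNIV
        \<and> 0 < fdiv f UNIV P Q \<and> fdiv f UNIV P Q < \<infinity>}"
    using PD QD AC F0 Dp by simp
  have "fdiv f {0,1} (kcomp ?K (fst (P, Q))) (kcomp ?K (snd (P, Q))) / fdiv f UNIV (fst (P, Q)) (snd (P, Q))
      \<le> eta f {0,1} ?K"
    unfolding eta_def by (rule SUP_upper[OF mem])
  moreover have "fdiv f {0,1} (kcomp ?K (fst (P, Q))) (kcomp ?K (snd (P, Q))) / fdiv f UNIV (fst (P, Q)) (snd (P, Q)) = 1"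
    using F0 F1 Dp by simp
  ultimately show ?thesis by simp
qed


theorem theorem2:
  fixes c eps :: real and f :: "real \<Rightarrow> real"
  assumes "CARD('x::finite) \<ge> 2"
    and "0 < c" and "c < 1 / real CARD('x)"
    and "eps \<ge> ln (2 / (real CARD('x) * c))"
    and "convex_on {0<..} f" and "f 1 = 0"
    and "\<exists>f' f''. (\<forall>t>0. (f has_real_derivative f' t) (at t) \<and> (f' has_real_derivative f'' t) (at t))
           \<and> continuous_on {0<..} f'' \<and> f'' 1 > 0"
  shows "(SUP YK \<in> (Mset eps c :: (nat set \<times> ('x \<Rightarrow> nat \<Rightarrow> real)) set). eta f (fst YK) (snd YK)) = 1"
proof -
  obtain f' f'' where d: "\<forall>t>0. (f has_real_derivative f' t) (at t) \<and> (f' has_real_derivative f'' t) (at t)"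
    and pos: "f'' 1 > 0" using assms(7) by blast
  have d1: "\<forall>t>0. (f has_real_derivative f' t) (at t)" and d2: "\<forall>t>0. (f' has_real_derivative f'' t) (at t)"
    using d by auto
  obtain e :: "'x \<Rightarrow> nat" where e: "bij_betw e UNIV {0..<CARD('x)}"
    using ex_bij_betw_finite_nat[of "UNIV :: 'x set"] by auto
  have M: "({0,1}, kern0 e CARD('x)) \<in> (Mset eps c :: (nat set \<times> ('x \<Rightarrow> nat \<Rightarrow> real)) set)"
    by (rule kern0_M[OF e assms(2) assms(4)])
  have ge: "eta f {0,1} (kern0 e CARD('x)) \<ge> 1"
    by (rule kern0_eta[OF e assms(1) strict_pos[OF d1 d2 pos] assms(6)])
  have le: "eta f (fst YK) (snd YK) \<le> 1" if "YK \<in> (Mset eps c :: (nat set \<times> ('x \<Rightarrow> nat \<Rightarrow> real)) set)" for YK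
  proof -
    have Y: "is_kernel (fst YK) (snd YK)" using that by (auto simp: Mset_def)
    show ?thesis unfolding eta_def
      by (rule SUP_least) (auto intro: ratio_le1[OF assms(5) d1 Y])
  qed
  show ?thesis
  proof (rule antisym)
    show "(SUP YK \<in> (Mset eps c :: (nat set \<times> ('x \<Rightarrow> nat \<Rightarrow> real)) set). eta f (fst YK) (snd YK)) \<le> 1"
      by (rule SUP_least) (rule le)
    show "1 \<le> (SUP YK \<in> (Mset eps c :: (nat set \<times> ('x \<Rightarrow> nat \<Rightarrow> real)) set). eta f (fst YK) (snd YK))"
      by (rule SUP_upper2[OF M]) (simp only: fst_conv snd_conv ge)
  qed
qed

end
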